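(* Consider $M$ positioning infrastructures; for the $m$-th infrastructure let $N_{\text{min}}^m$ be the minimum number of anchors required for positioning, $N_{\text{anc}}^m$ the total number of anchors providing ranging information, and $N_{\text{adv}}^m$ the number of anchors whose ranging information is manipulated by an uncoordinated attacker. Suppose that $$\left|\left\{m \mid N_{\text{anc}}^m - N_{\text{adv}}^m - N_{\text{min}}^m = 0\right\}\right| > 1 \ \lor\ \exists m,\ N_{\text{anc}}^m - N_{\text{adv}}^m - N_{\text{min}}^m > 0.$$ Then the true position $\mathbf{p}_{\text{usr}}(t)$ can be recovered from uncoordinated spoofing.
   Context: Idealized model of subset-based integrity monitoring across multiple infrastructures (e.g., GNSS, Wi-Fi, cellular): a platform at unknown true position $\mathbf{p}_{\text{usr}}(t)\in\mathbb{R}^3$ receives ranging measurements from anchors with known positions. Within each infrastructure $m$, for every subset of its anchors of size at least $N_{\text{min}}^m$ a position estimate is computed. Positioning noise and uncertainties are negligible (zero) while attacker-induced deviations are preserved, and geometry is good, so every benign-only subset yields exactly $\mathbf{p}_{\text{usr}}(t)$. "Uncoordinated spoofing" means manipulated ranging values are chosen independently (potentially randomly), so estimates from subsets involving manipulated measurements are random positions, almost surely inconsistent with the benign position and each other; "recovered" means the spoofed estimates can be excluded so that the remaining (more than one, mutually consistent) benign estimates give $\mathbf{p}_{\text{usr}}(t)$. *)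

theory Defs
  imports "HOL-Analysis.Analysis"
begin

text \<open>Anc m is the finite set of
anchors of infrastructure m, Adv m \<subseteq> Anc m the manipulated ones, Nmin m the minimum
number of anchors for positioning. A subset estimate is indexed by a pair (m, S) with
S \<subseteq> Anc m and card S \<ge> Nmin m; est m S :: real^3 is its position estimate.\<close>

definition subset_indices ::
  "nat \<Rightarrow> (nat \<Rightarrow> 'a set) \<Rightarrow> (nat \<Rightarrow> nat) \<Rightarrow> (nat \<times> 'a set) set" where
  "subset_indices M Anc Nmin = {(m, S). m < M \<and> S \<subseteq> Anc m \<and> Nmin m \<le> card S}"

text \<open>Noise-free geometry: every benign-only subset yields exactly the true position.\<close>
definition benign_exact where
  "benign_exact M Anc Adv Nmin est p \<longleftrightarrow>
     (\<forall>(m, S) \<in> subset_indices M Anc Nmin. S \<inter> Adv m = {} \<longrightarrow> est m S = p)"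

text \<open>Uncoordinated spoofing (almost-sure genericity): every estimate from a subset
involving a manipulated measurement differs from the true position and from every
other such estimate.\<close>
definition uncoordinated_spoofing where
  "uncoordinated_spoofing M Anc Adv Nmin est p \<longleftrightarrow>
     (\<forall>(m, S) \<in> subset_indices M Anc Nmin. S \<inter> Adv m \<noteq> {} \<longrightarrow>
        est m S \<noteq> p \<and>
        (\<forall>(m', S') \<in> subset_indices M Anc Nmin. S' \<inter> Adv m' \<noteq> {} \<longrightarrow>
            (m', S') \<noteq> (m, S) \<longrightarrow> est m' S' \<noteq> est m S))"

definition support where
  "support M Anc Nmin est q = card {(m, S) \<in> subset_indices M Anc Nmin. est m S = q}"

text \<open>Recovered: after excluding inconsistent (spoofed) estimates, the remaining mutually
consistent estimates (more than one) give p, and p is the only position on which more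
than one estimate agrees.\<close>
definition recovered where
  "recovered M Anc Nmin est p \<longleftrightarrow>
     support M Anc Nmin est p > 1 \<and> (\<forall>q. support M Anc Nmin est q > 1 \<longrightarrow> q = p)"

end

theory Submission
  imports Defs
begin

lemma card_ge2:
  assumes "finite A" "x \<in> A" "y \<in> A" "x \<noteq> y"
  shows "card A > 1"
proof -
  have "{x, y} \<subseteq> A" using assms by auto
  hence "card {x, y} \<le> card A" using assms(1) by (rule card_mono[rotated])
  thus ?thesis using assms(4) by simp
qed

lemma card_gt1_two:
  assumes "card A > 1"
  obtains x y where "x \<in> A" "y \<in> A" "x \<noteq> y"
proof -
  have "finite A" using assms using card.infinite by fastforce
  from assms obtain x where x: "x \<in> A"
    by (metis card.empty ex_in_conv not_less_zero less_one less_trans)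
  have "card (A - {x}) > 0" using assms x \<open>finite A\<close> by simp
  then obtain y where "y \<in> A - {x}" by (metis card.empty ex_in_conv less_irrefl)
  thus ?thesis using that x by blast
qed

theorem theorem1:
  fixes M :: nat
    and Anc Adv :: "nat \<Rightarrow> 'a set"
    and Nmin :: "nat \<Rightarrow> nat"
    and est :: "nat \<Rightarrow> 'a set \<Rightarrow> real ^ 3"
    and p_usr :: "real ^ 3"
  assumes fin: "\<And>m. m < M \<Longrightarrow> finite (Anc m)"
    and adv_sub: "\<And>m. m < M \<Longrightarrow> Adv m \<subseteq> Anc m"
    and geom: "benign_exact M Anc Adv Nmin est p_usr"
    and unc: "uncoordinated_spoofing M Anc Adv Nmin est p_usr"
    and cond: "card {m. m < M \<and> int (card (Anc m)) - int (card (Adv m)) - int (Nmin m) = 0} > 1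
            \<or> (\<exists>m < M. int (card (Anc m)) - int (card (Adv m)) - int (Nmin m) > 0)"
  shows "recovered M Anc Nmin est p_usr"
proof -
  let ?I = "subset_indices M Anc Nmin"
  let ?P = "{(m, S) \<in> ?I. est m S = p_usr}"
  have finI: "finite ?I"
  proof (rule finite_subset)
    show "?I \<subseteq> (\<Union>m<M. {m} \<times> Pow (Anc m))" unfolding subset_indices_def by auto
    show "finite (\<Union>m<M. {m} \<times> Pow (Anc m))" using fin by auto
  qed
  have finP: "finite ?P" by (rule finite_subset[OF _ finI]) auto
  have cardB: "card (Anc m - Adv m) = card (Anc m) - card (Adv m)" if "m < M" for m
    using adv_sub[OF that] fin[OF that] by (simp add: card_Diff_subset finite_subset)
  have benP: "(m, Anc m - Adv m - T) \<in> ?P" if "m < M" "Nmin m \<le> card (Anc m - Adv m - T)" for m T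
  proof -
    have "(m, Anc m - Adv m - T) \<in> ?I" using that unfolding subset_indices_def by auto
    moreover have "(Anc m - Adv m - T) \<inter> Adv m = {}" by auto
    ultimately show ?thesis using geom unfolding benign_exact_def by auto
  qed
  have s1: "support M Anc Nmin est p_usr > 1"
    unfolding support_def
    using cond
  proof
    assume "card {m. m < M \<and> int (card (Anc m)) - int (card (Adv m)) - int (Nmin m) = 0} > 1"
    then obtain m1 m2 where m: "m1 \<in> {m. m < M \<and> int (card (Anc m)) - int (card (Adv m)) - int (Nmin m) = 0}"
      "m2 \<in> {m. m < M \<and> int (card (Anc m)) - int (card (Adv m)) - int (Nmin m) = 0}" "m1 \<noteq> m2"
      by (rule card_gt1_two)
    have a: "(m1, Anc m1 - Adv m1 - {}) \<in> ?P" using m cardB[of m1] by (intro benP) auto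
    have b: "(m2, Anc m2 - Adv m2 - {}) \<in> ?P" using m cardB[of m2] by (intro benP) auto
    show "card ?P > 1" by (rule card_ge2[OF finP a b]) (use m in auto)
  next
    assume "\<exists>m < M. int (card (Anc m)) - int (card (Adv m)) - int (Nmin m) > 0"
    then obtain m where m: "m < M" "int (card (Anc m)) - int (card (Adv m)) - int (Nmin m) > 0" by blast
    have cg: "card (Anc m - Adv m) > Nmin m" using m cardB[of m] by auto
    then obtain x where x: "x \<in> Anc m - Adv m" by (metis card.empty ex_in_conv not_less_zero)
    have finB: "finite (Anc m - Adv m)" using fin[OF m(1)] by auto
    have a: "(m, Anc m - Adv m - {}) \<in> ?P" using m cg by (intro benP) auto
    have "card (Anc m - Adv m - {x}) = card (Anc m - Adv m) - 1" using x finB by simp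
    hence b: "(m, Anc m - Adv m - {x}) \<in> ?P" using m cg by (intro benP) auto
    have "Anc m - Adv m - {} \<noteq> Anc m - Adv m - {x}" using x by auto
    then show "card ?P > 1" by (intro card_ge2[OF finP a b]) auto
  qed
  have s2: "q = p_usr" if q: "support M Anc Nmin est q > 1" for q
  proof (rule ccontr)
    assume ne: "q \<noteq> p_usr"
    from q obtain a b where ab: "a \<in> {(m, S) \<in> ?I. est m S = q}" "b \<in> {(m, S) \<in> ?I. est m S = q}" "a \<noteq> b"
      unfolding support_def by (rule card_gt1_two)
    obtain m S where a: "a = (m, S)" by fastforce
    obtain m' S' where b: "b = (m', S')" by fastforce
    have spa: "S \<inter> Adv m \<noteq> {}" using ab a ne geom unfolding benign_exact_def by auto
    have spb: "S' \<inter> Adv m' \<noteq> {}" using ab b ne geom unfolding benign_exact_def by auto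
    show False using unc ab a b spa spb unfolding uncoordinated_spoofing_def by fastforce
  qed
  show ?thesis unfolding recovered_def using s1 s2 by blast
qed

end
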